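(* Assume: (i) $\nabla_\theta G$ is Lipschitz-continuous with constant $L_0$; (ii) $\|J_\theta f(x_i^u;\theta)\|\le M$ for all $i\in\{1,\dots,N^u\}$ and all $\theta$. If the learning rates satisfy $\alpha_t^2\beta_t<(4M^2L_0)^{-1}$, then each step of the algorithm decreases the labeled loss, regardless of which unlabeled mini-batch is selected: $$G(\theta_{t+1})\le G(\theta_t)\quad\text{for each }t.$$ Moreover, equality holds if and only if $\nabla\tilde y=0$ for the unlabeled batch selected at step $t$.
   Context: **Model and data.** Let $f(x;\theta)\in\mathbb{R}^C$ be a classifier, continuously differentiable in the parameter $\theta\in\mathbb{R}^d$. The labeled data are $\{(x_k^l,y_k)\}_{k=1}^{N^l}$ and the unlabeled data are $\mathcal D^u=\{x_i^u\}_{i=1}^{N^u}$. Write $J_\theta f(x;\theta)\in\mathbb{R}^{C\times d}$ for the Jacobian of $f$ in $\theta$, with $\|\cdot\|$ the operator norm. **Losses.** The loss of a pair is $\mathcal L(x,y;\theta)=\|f(x;\theta)-y\|_2^2$ (squared error). The labeled loss over the full labeled set is $$G(\theta)=\frac{1}{N^l}\sum_{k=1}^{N^l}\mathcal L(x_k^l,y_k;\theta).$$ **The algorithm (meta-gradient SSL).** Start from $\theta_1$, with regular learning rates $\alpha_t>0$ and meta learning rates $\beta_t>0$. All labeled data are used at every step. At step $t$: 1. An unlabeled mini-batch $x_1^u,\dots,x_{B^u}^u$ is sampled from $\mathcal D^u$. 2. For pseudo labels $\tilde y=(\tilde y_1,\dots,\tilde y_{B^u})$, regarded as one vector, set $$\tilde\theta_{t+1}(\tilde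 y)=\theta_t-\frac{\alpha_t}{B^u}\sum_{i=1}^{B^u}\nabla_\theta\mathcal L(x_i^u,\tilde y_i;\theta_t)$$ and $H(\tilde y)=G(\tilde\theta_{t+1}(\tilde y))$. 3. The pseudo labels are initialized at $\tilde y_i=f(x_i^u;\theta_t)$. 4. The meta-gradient is $\nabla\tilde y=\nabla_{\tilde y}H(\tilde y)$, evaluated at this initialization. 5. The pseudo labels are updated as $\hat y=\tilde y-\beta_t\nabla\tilde y$. 6. The parameters are updated as $\theta_{t+1}=\tilde\theta_{t+1}(\hat y)=\theta_t-\frac{\alpha_t}{B^u}\sum_{i=1}^{B^u}\nabla_\theta\mathcal L(x_i^u,\hat y_i;\theta_t)$. *)

theory Defs
  imports "HOL-Analysis.Analysis"
begin

definition grad :: "('a::real_inner \<Rightarrow> real) \<Rightarrow> 'a \<Rightarrow> 'a" where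
  "grad F x = (THE g. (F has_derivative (\<lambda>h. g \<bullet> h)) (at x))"

definition sqloss :: "('x \<Rightarrow> real^'d \<Rightarrow> real^'c) \<Rightarrow> 'x \<Rightarrow> real^'c \<Rightarrow> real^'d \<Rightarrow> real" where
  "sqloss f x y \<theta> = (norm (f x \<theta> - y))\<^sup>2"

definition labeled_loss ::
  "('x \<Rightarrow> real^'d \<Rightarrow> real^'c) \<Rightarrow> (nat \<Rightarrow> 'x) \<Rightarrow> (nat \<Rightarrow> real^'c) \<Rightarrow> nat \<Rightarrow> real^'d \<Rightarrow> real" where
  "labeled_loss f xl yl Nl \<theta> = (1 / real Nl) * (\<Sum>k = 1..Nl. sqloss f (xl k) (yl k) \<theta>)"

text \<open>Virtual update theta~_{t+1}(y~) for a mini-batch xb indexed by the finite type 'b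
  (batch size B = CARD('b)), pseudo labels y~ :: real^'c^'b.\<close>
definition virtual_step ::
  "('x \<Rightarrow> real^'d \<Rightarrow> real^'c) \<Rightarrow> real \<Rightarrow> ('b::finite \<Rightarrow> 'x) \<Rightarrow> real^'d \<Rightarrow> real^'c^'b \<Rightarrow> real^'d" where
  "virtual_step f \<alpha> xb \<theta> yt =
     \<theta> - (\<alpha> / real CARD('b)) *\<^sub>R (\<Sum>i\<in>UNIV. grad (\<lambda>\<theta>'. sqloss f (xb i) (yt $ i) \<theta>') \<theta>)"

definition meta_obj ::
  "('x \<Rightarrow> real^'d \<Rightarrow> real^'c) \<Rightarrow> (nat \<Rightarrow> 'x) \<Rightarrow> (nat \<Rightarrow> real^'c) \<Rightarrow> nat \<Rightarrow> real
    \<Rightarrow> ('b::finite \<Rightarrow> 'x) \<Rightarrow> real^'d \<Rightarrow> real^'c^'b \<Rightarrow> real" where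
  "meta_obj f xl yl Nl \<alpha> xb \<theta> yt = labeled_loss f xl yl Nl (virtual_step f \<alpha> xb \<theta> yt)"

definition init_labels :: "('x \<Rightarrow> real^'d \<Rightarrow> real^'c) \<Rightarrow> ('b::finite \<Rightarrow> 'x) \<Rightarrow> real^'d \<Rightarrow> real^'c^'b" where
  "init_labels f xb \<theta> = (\<chi> i. f (xb i) \<theta>)"

definition meta_grad ::
  "('x \<Rightarrow> real^'d \<Rightarrow> real^'c) \<Rightarrow> (nat \<Rightarrow> 'x) \<Rightarrow> (nat \<Rightarrow> real^'c) \<Rightarrow> nat \<Rightarrow> real
    \<Rightarrow> ('b::finite \<Rightarrow> 'x) \<Rightarrow> real^'d \<Rightarrow> real^'c^'b" where
  "meta_grad f xl yl Nl \<alpha> xb \<theta> =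
     grad (meta_obj f xl yl Nl \<alpha> xb \<theta>) (init_labels f xb \<theta>)"

definition meta_step ::
  "('x \<Rightarrow> real^'d \<Rightarrow> real^'c) \<Rightarrow> (nat \<Rightarrow> 'x) \<Rightarrow> (nat \<Rightarrow> real^'c) \<Rightarrow> nat \<Rightarrow> real \<Rightarrow> real
    \<Rightarrow> ('b::finite \<Rightarrow> 'x) \<Rightarrow> real^'d \<Rightarrow> real^'d" where
  "meta_step f xl yl Nl \<alpha> \<beta> xb \<theta> =
     virtual_step f \<alpha> xb \<theta>
       (init_labels f xb \<theta> - \<beta> *\<^sub>R meta_grad f xl yl Nl \<alpha> xb \<theta>)"

text \<open>The iterates theta_t (t = 1, 2, ...; index 0 is unused and set to theta_1),
  with rates alpha t, beta t and selected mini-batch xb t at step t.\<close>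
fun iterate ::
  "('x \<Rightarrow> real^'d \<Rightarrow> real^'c) \<Rightarrow> (nat \<Rightarrow> 'x) \<Rightarrow> (nat \<Rightarrow> real^'c) \<Rightarrow> nat \<Rightarrow> (nat \<Rightarrow> real) \<Rightarrow> (nat \<Rightarrow> real)
    \<Rightarrow> (nat \<Rightarrow> 'b::finite \<Rightarrow> 'x) \<Rightarrow> real^'d \<Rightarrow> nat \<Rightarrow> real^'d" where
  "iterate f xl yl Nl \<alpha> \<beta> xb \<theta>1 0 = \<theta>1"
| "iterate f xl yl Nl \<alpha> \<beta> xb \<theta>1 (Suc 0) = \<theta>1"
| "iterate f xl yl Nl \<alpha> \<beta> xb \<theta>1 (Suc (Suc t)) =
     meta_step f xl yl Nl (\<alpha> (Suc t)) (\<beta> (Suc t)) (xb (Suc t)) (iterate f xl yl Nl \<alpha> \<beta> xb \<theta>1 (Suc t))"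

end

theory Submission imports Defs begin

lemma grad_eq:
  fixes F :: "'a::real_inner \<Rightarrow> real"
  assumes "(F has_derivative (\<lambda>h. g \<bullet> h)) (at x)"
  shows "grad F x = g"
  unfolding grad_def
proof (rule the_equality)
  show "(F has_derivative (\<lambda>h. g \<bullet> h)) (at x)" by fact
  fix g' assume "(F has_derivative (\<lambda>h. g' \<bullet> h)) (at x)"
  then have "(\<lambda>h. g' \<bullet> h) = (\<lambda>h. g \<bullet> h)" using assms has_derivative_unique by blast
  then have "g' \<bullet> (g' - g) = g \<bullet> (g' - g)" by metis
  then have "(g' - g) \<bullet> (g' - g) = 0" by (simp add: inner_diff_left)
  then show "g' = g" by simp
qed

lemma f_deriv:
  fixes f :: "'x \<Rightarrow> real^'d \<Rightarrow> real^'c"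
  assumes "\<And>x \<theta>. f x differentiable (at \<theta>)"
  shows "(f x has_derivative (\<lambda>h. jacobian (f x) (at \<theta>) *v h)) (at \<theta>)"
  using assms jacobian_works by blast

lemma sq_deriv:
  fixes f :: "'x \<Rightarrow> real^'d \<Rightarrow> real^'c"
  assumes "\<And>x \<theta>. f x differentiable (at \<theta>)"
  shows "((\<lambda>\<theta>'. sqloss f x y \<theta>') has_derivative
     (\<lambda>h. (2 *\<^sub>R (transpose (jacobian (f x) (at \<theta>)) *v (f x \<theta> - y))) \<bullet> h)) (at \<theta>)"
proof -
  let ?J = "jacobian (f x) (at \<theta>)"
  have d: "((\<lambda>\<theta>'. f x \<theta>' - y) has_derivative (\<lambda>h. ?J *v h)) (at \<theta>)"
    using f_deriv[OF assms] by (auto intro!: derivative_eq_intros)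
  have "((\<lambda>\<theta>'. (f x \<theta>' - y) \<bullet> (f x \<theta>' - y)) has_derivative
      (\<lambda>h. (f x \<theta> - y) \<bullet> (?J *v h) + (?J *v h) \<bullet> (f x \<theta> - y))) (at \<theta>)"
    by (rule has_derivative_inner[OF d d])
  moreover have "\<And>h. (f x \<theta> - y) \<bullet> (?J *v h) + (?J *v h) \<bullet> (f x \<theta> - y)
      = (2 *\<^sub>R (transpose ?J *v (f x \<theta> - y))) \<bullet> h"
    by (metis (no_types, lifting) dot_lmul_matrix inner_commute inner_scaleR_left mult_2 scaleR_add_left scaleR_one transpose_matrix_vector)
  ultimately show ?thesis
    unfolding sqloss_def power2_norm_eq_inner by simp
qed

lemma sq_grad:
  fixes f :: "'x \<Rightarrow> real^'d \<Rightarrow> real^'c"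
  assumes "\<And>x \<theta>. f x differentiable (at \<theta>)"
  shows "grad (\<lambda>\<theta>'. sqloss f x y \<theta>') \<theta> = 2 *\<^sub>R (transpose (jacobian (f x) (at \<theta>)) *v (f x \<theta> - y))"
  by (rule grad_eq[OF sq_deriv[OF assms]])


lemma descent:
  fixes G :: "'a::real_inner \<Rightarrow> real"
  assumes D: "\<And>y. (G has_derivative (\<lambda>h. gr y \<bullet> h)) (at y)"
    and L: "\<And>y z. norm (gr y - gr z) \<le> L * norm (y - z)"
  shows "G (x - s) \<le> G x - gr x \<bullet> s + L / 2 * (norm s)\<^sup>2"
proof -
  define \<phi> where "\<phi> \<tau> = G (x - \<tau> *\<^sub>R s) + \<tau> * (gr x \<bullet> s) - L / 2 * \<tau>\<^sup>2 * (norm s)\<^sup>2" for \<tau> :: real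
  have "\<phi> 0 \<ge> \<phi> 1"
  proof (rule DERIV_nonpos_imp_nonincreasing[of 0 1 \<phi>])
    fix \<tau> :: real assume \<tau>: "0 \<le> \<tau>" "\<tau> \<le> 1"
    have d1: "((\<lambda>\<tau>. x - \<tau> *\<^sub>R s) has_derivative (\<lambda>h. - (h *\<^sub>R s))) (at \<tau>)"
      by (auto intro!: derivative_eq_intros)
    have d2: "((\<lambda>\<tau>. G (x - \<tau> *\<^sub>R s)) has_derivative (\<lambda>h. gr (x - \<tau> *\<^sub>R s) \<bullet> (- (h *\<^sub>R s)))) (at \<tau>)"
      using has_derivative_compose[OF d1 D] by simp
    have d3: "((\<lambda>\<tau>. G (x - \<tau> *\<^sub>R s)) has_field_derivative (- (gr (x - \<tau> *\<^sub>R s) \<bullet> s))) (at \<tau>)"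
      by (rule has_derivative_imp_has_field_derivative[OF d2]) simp
    have "(\<phi> has_field_derivative (- (gr (x - \<tau> *\<^sub>R s) \<bullet> s) + gr x \<bullet> s - L / 2 * (2 * \<tau>) * (norm s)\<^sup>2)) (at \<tau>)"
      unfolding \<phi>_def
      by (rule derivative_eq_intros d3 refl | simp)+
    moreover have "- (gr (x - \<tau> *\<^sub>R s) \<bullet> s) + gr x \<bullet> s - L / 2 * (2 * \<tau>) * (norm s)\<^sup>2 \<le> 0"
    proof -
      have "(gr x - gr (x - \<tau> *\<^sub>R s)) \<bullet> s \<le> norm (gr x - gr (x - \<tau> *\<^sub>R s)) * norm s"
        by (rule norm_cauchy_schwarz)
      also have "\<dots> \<le> L * norm (x - (x - \<tau> *\<^sub>R s)) * norm s"
        by (rule mult_right_mono[OF L]) simp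
      also have "\<dots> = L * \<tau> * (norm s)\<^sup>2" using \<tau> by (simp add: power2_eq_square)
      finally show ?thesis by (simp add: inner_diff_left)
    qed
    ultimately show "\<exists>y. (\<phi> has_real_derivative y) (at \<tau>) \<and> y \<le> 0" by blast
  qed simp
  then show ?thesis unfolding \<phi>_def by simp
qed


lemma G_deriv:
  fixes f :: "'x \<Rightarrow> real^'d \<Rightarrow> real^'c"
  assumes C1: "\<And>x \<theta>. f x differentiable (at \<theta>)"
  shows "(labeled_loss f xl yl Nl has_derivative (\<lambda>h. grad (labeled_loss f xl yl Nl) y \<bullet> h)) (at y)"
proof -
  let ?g = "\<lambda>k. 2 *\<^sub>R (transpose (jacobian (f (xl k)) (at y)) *v (f (xl k) y - yl k))"
  have D: "((\<lambda>\<theta>. (1 / real Nl) * (\<Sum>k = 1..Nl. sqloss f (xl k) (yl k) \<theta>)) has_derivative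
      (\<lambda>h. (1 / real Nl) * (\<Sum>k = 1..Nl. ?g k \<bullet> h))) (at y)"
    by (intro has_derivative_mult_right has_derivative_sum sq_deriv[OF C1])
  have e0: "\<And>h. (1 / real Nl) * (\<Sum>k = 1..Nl. ?g k \<bullet> h) = ((1 / real Nl) *\<^sub>R (\<Sum>k = 1..Nl. ?g k)) \<bullet> h"
    by (simp only: inner_sum_left inner_scaleR_left)
  have e: "(\<lambda>h. (1 / real Nl) * (\<Sum>k = 1..Nl. ?g k \<bullet> h)) = (\<lambda>h. ((1 / real Nl) *\<^sub>R (\<Sum>k = 1..Nl. ?g k)) \<bullet> h)"
    using e0 by (rule ext)
  have d: "(labeled_loss f xl yl Nl has_derivative
      (\<lambda>h. ((1 / real Nl) *\<^sub>R (\<Sum>k = 1..Nl. ?g k)) \<bullet> h)) (at y)"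
    unfolding labeled_loss_def[abs_def] by (rule has_derivative_eq_rhs[OF D e])
  show ?thesis using d grad_eq[OF d] by simp
qed

lemma vs_eq:
  fixes f :: "'x \<Rightarrow> real^'d \<Rightarrow> real^'c" and xb :: "'b::finite \<Rightarrow> 'x"
  assumes C1: "\<And>x \<theta>. f x differentiable (at \<theta>)"
  shows "virtual_step f \<alpha> xb \<theta> yt = \<theta> - (2 * \<alpha> / real CARD('b)) *\<^sub>R
     (\<Sum>i\<in>UNIV. transpose (jacobian (f (xb i)) (at \<theta>)) *v (f (xb i) \<theta> - yt $ i))"
  unfolding virtual_step_def sq_grad[OF C1]
  by (simp add: scaleR_sum_right[symmetric])


lemma mg_eq:
  fixes f :: "'x \<Rightarrow> real^'d \<Rightarrow> real^'c" and xb :: "'b::finite \<Rightarrow> 'x"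
  assumes C1: "\<And>x \<theta>. f x differentiable (at \<theta>)"
  shows "meta_grad f xl yl Nl \<alpha> xb \<theta> = (\<chi> i. (2 * \<alpha> / real CARD('b)) *\<^sub>R
            (jacobian (f (xb i)) (at \<theta>) *v grad (labeled_loss f xl yl Nl) \<theta>))"
proof -
  define c where "c = 2 * \<alpha> / real CARD('b)"
  define T where "T i = transpose (jacobian (f (xb i)) (at \<theta>))" for i
  define G where "G = labeled_loss f xl yl Nl"
  define gG where "gG = grad G \<theta>"
  define V where "V yt = \<theta> - c *\<^sub>R (\<Sum>i\<in>UNIV. T i *v (f (xb i) \<theta> - yt $ i))" for yt :: "real^'c^'b"
  have Veq: "virtual_step f \<alpha> xb \<theta> = V"
    by (rule ext) (simp add: vs_eq[OF C1] V_def c_def T_def)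
  have V0: "V (init_labels f xb \<theta>) = \<theta>"
    by (simp add: V_def init_labels_def)
  have dV: "(V has_derivative (\<lambda>h. c *\<^sub>R (\<Sum>i\<in>UNIV. T i *v (h $ i)))) (at y)" for y
    unfolding V_def
    by (auto intro!: derivative_eq_intros bounded_linear.has_derivative[OF bounded_linear_vec_nth]
         bounded_linear.has_derivative[OF matrix_vector_mul_bounded_linear]
         simp: matrix_vector_mult_diff_distrib sum_negf)
  have dM: "((\<lambda>yt. G (V yt)) has_derivative (\<lambda>h. gG \<bullet> (c *\<^sub>R (\<Sum>i\<in>UNIV. T i *v (h $ i)))))
      (at (init_labels f xb \<theta>))"
    using has_derivative_compose[OF dV G_deriv[OF C1, where xl=xl and yl=yl and Nl=Nl and y="V (init_labels f xb \<theta>)"]]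
    unfolding V0 G_def gG_def by simp
  have e: "(\<lambda>h. gG \<bullet> (c *\<^sub>R (\<Sum>i\<in>UNIV. T i *v (h $ i))))
      = (\<lambda>h. (\<chi> i. c *\<^sub>R (jacobian (f (xb i)) (at \<theta>) *v gG)) \<bullet> h)"
  proof
    fix h :: "real^'c^'b"
    show "gG \<bullet> (c *\<^sub>R (\<Sum>i\<in>UNIV. T i *v (h $ i))) = (\<chi> i. c *\<^sub>R (jacobian (f (xb i)) (at \<theta>) *v gG)) \<bullet> h"
    proof -
      have "gG \<bullet> (c *\<^sub>R (\<Sum>i\<in>UNIV. T i *v (h $ i))) = c * (\<Sum>i\<in>UNIV. gG \<bullet> (T i *v (h $ i)))"
        by (simp add: inner_sum_right)
      also have "\<dots> = c * (\<Sum>i\<in>UNIV. (h $ i) \<bullet> (jacobian (f (xb i)) (at \<theta>) *v gG))"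
        unfolding T_def transpose_matrix_vector
        by (simp add: inner_commute[of gG] dot_lmul_matrix)
      also have "\<dots> = (\<Sum>i\<in>UNIV. (c *\<^sub>R (jacobian (f (xb i)) (at \<theta>) *v gG)) \<bullet> (h $ i))"
        by (simp add: sum_distrib_left inner_commute)
      also have "\<dots> = (\<chi> i. c *\<^sub>R (jacobian (f (xb i)) (at \<theta>) *v gG)) \<bullet> h"
        by (subst (2) inner_vec_def) simp
      finally show ?thesis .
    qed
  qed
  have "grad (\<lambda>yt. G (V yt)) (init_labels f xb \<theta>) = (\<chi> i. c *\<^sub>R (jacobian (f (xb i)) (at \<theta>) *v gG))"
    by (rule grad_eq) (use dM e in simp)
  then show ?thesis
    unfolding meta_grad_def meta_obj_def[abs_def] Veq[symmetric] G_def gG_def c_def by simp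
qed


lemma one_step:
  fixes f :: "'x \<Rightarrow> real^'d \<Rightarrow> real^'c" and xb :: "'b::finite \<Rightarrow> 'x"
  assumes C1: "\<And>x \<theta>. f x differentiable (at \<theta>)"
    and lip: "\<And>\<theta> \<theta>'. norm (grad (labeled_loss f xl yl Nl) \<theta> - grad (labeled_loss f xl yl Nl) \<theta>')
                       \<le> L0 * norm (\<theta> - \<theta>')"
    and jb: "\<And>i \<theta>. onorm (\<lambda>h. jacobian (f (xb i)) (at \<theta>) *v h) \<le> M"
    and ap: "\<alpha> > 0" and bp: "\<beta> > 0"
    and rate: "4 * M\<^sup>2 * L0 * (\<alpha>\<^sup>2 * \<beta>) < 1"
  shows "labeled_loss f xl yl Nl (meta_step f xl yl Nl \<alpha> \<beta> xb \<theta>) \<le> labeled_loss f xl yl Nl \<theta>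
    \<and> (labeled_loss f xl yl Nl (meta_step f xl yl Nl \<alpha> \<beta> xb \<theta>) = labeled_loss f xl yl Nl \<theta>
        \<longleftrightarrow> meta_grad f xl yl Nl \<alpha> xb \<theta> = 0)"
proof -
  define B where "B = real CARD('b)"
  have Bpos: "B \<ge> 1" unfolding B_def by (simp add: Suc_leI)
  define c where "c = 2 * \<alpha> / B"
  define J where "J i = jacobian (f (xb i)) (at \<theta>)" for i
  define G where "G = labeled_loss f xl yl Nl"
  define gG where "gG = grad G \<theta>"
  define mg where "mg = meta_grad f xl yl Nl \<alpha> xb \<theta>"
  have mg: "mg = (\<chi> i. c *\<^sub>R (J i *v gG))"
    unfolding mg_def mg_eq[OF C1] c_def B_def J_def gG_def G_def ..
  define d where "d = c *\<^sub>R (\<Sum>i\<in>UNIV. transpose (J i) *v (mg $ i))"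
  have step: "meta_step f xl yl Nl \<alpha> \<beta> xb \<theta> = \<theta> - \<beta> *\<^sub>R d"
    unfolding meta_step_def vs_eq[OF C1] d_def
    by (simp add: init_labels_def J_def mg_def c_def B_def matrix_vector_mult_scaleR
          scaleR_sum_right[symmetric])
  have Mnn: "M \<ge> 0"
    using jb[of undefined \<theta>] onorm_pos_le[OF matrix_vector_mul_bounded_linear] by (meson order_trans)
  have L0nn: "L0 \<ge> 0"
  proof -
    obtain i :: 'd where True by simp
    have "norm (grad G 0 - grad G (axis i 1)) \<le> L0 * norm ((0::real^'d) - axis i 1)"
      using lip unfolding G_def .
    then have a: "0 \<le> L0 * norm ((0::real^'d) - axis i 1)" by (meson norm_ge_zero order_trans)
    have "axis i (1::real) \<noteq> 0" by (simp add: axis_eq_0_iff)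
    then have "norm ((0::real^'d) - axis i 1) > 0" by simp
    then show ?thesis using a by (simp add: zero_le_mult_iff)
  qed
  have gd: "gG \<bullet> d = (norm mg)\<^sup>2"
  proof -
    have "gG \<bullet> d = c * (\<Sum>i\<in>UNIV. (mg $ i) \<bullet> (J i *v gG))"
      unfolding d_def transpose_matrix_vector
      by (simp add: inner_sum_right inner_commute[of gG] dot_lmul_matrix)
    also have "\<dots> = (\<Sum>i\<in>UNIV. (mg $ i) \<bullet> (mg $ i))"
      unfolding sum_distrib_left by (simp add: mg)
    also have "\<dots> = mg \<bullet> mg" by (simp only: inner_vec_def[of mg mg])
    finally show ?thesis by (simp add: power2_norm_eq_inner)
  qed
  have nd: "norm d \<le> 2 * \<alpha> * M * norm mg"
  proof -
    have "(norm d)\<^sup>2 = d \<bullet> d" by (simp add: power2_norm_eq_inner)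
    also have "\<dots> = (c *\<^sub>R (\<Sum>i\<in>UNIV. transpose (J i) *v (mg $ i))) \<bullet> d"
      by (rule arg_cong[where f="\<lambda>x. x \<bullet> d"]) (rule d_def)
    also have "\<dots> = c * (\<Sum>i\<in>UNIV. (mg $ i) \<bullet> (J i *v d))"
      unfolding transpose_matrix_vector
      by (simp add: inner_sum_left dot_lmul_matrix)
    also have "\<dots> \<le> c * (\<Sum>i\<in>(UNIV::'b set). norm mg * (M * norm d))"
    proof (rule mult_left_mono)
      show "(\<Sum>i\<in>UNIV. (mg $ i) \<bullet> (J i *v d)) \<le> (\<Sum>i\<in>(UNIV::'b set). norm mg * (M * norm d))"
      proof (rule sum_mono)
      fix i
      have "(mg $ i) \<bullet> (J i *v d) \<le> norm (mg $ i) * norm (J i *v d)" by (rule norm_cauchy_schwarz)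
      also have "\<dots> \<le> norm mg * (M * norm d)"
      proof (rule mult_mono)
        show "norm (mg $ i) \<le> norm mg" by (rule Finite_Cartesian_Product.norm_nth_le)
        have "norm (J i *v d) \<le> onorm (\<lambda>h. J i *v h) * norm d"
          by (rule onorm[OF matrix_vector_mul_bounded_linear])
        also have "\<dots> \<le> M * norm d" using jb[of i \<theta>] unfolding J_def by (simp add: mult_right_mono)
        finally show "norm (J i *v d) \<le> M * norm d" .
      qed (use Mnn in auto)
      finally show "(mg $ i) \<bullet> (J i *v d) \<le> norm mg * (M * norm d)" .
      qed
    next
      show "0 \<le> c" using ap Bpos by (simp add: c_def)
    qed
    also have "\<dots> = c * B * (norm mg * (M * norm d))"
      by (simp add: B_def)
    also have "\<dots> = 2 * \<alpha> * M * norm mg * norm d"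
      using Bpos by (simp add: c_def)
    finally have "norm d * norm d \<le> (2 * \<alpha> * M * norm mg) * norm d" by (simp add: power2_eq_square)
    then show ?thesis
    proof (cases "norm d = 0")
      case True
      then show ?thesis using Mnn ap by simp
    next
      case False
      then have "norm d > 0" by simp
      then show ?thesis using \<open>norm d * norm d \<le> (2 * \<alpha> * M * norm mg) * norm d\<close>
        by (meson mult_le_cancel_right_pos)
    qed
  qed
  have desc: "G (\<theta> - \<beta> *\<^sub>R d) \<le> G \<theta> - gG \<bullet> (\<beta> *\<^sub>R d) + L0 / 2 * (norm (\<beta> *\<^sub>R d))\<^sup>2"
    unfolding gG_def
    by (rule descent[where gr="grad G"]) (use G_deriv[OF C1] lip in \<open>auto simp: G_def\<close>)
  define n where "n = (norm mg)\<^sup>2"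
  have nn: "n \<ge> 0" by (simp add: n_def)
  have q: "(norm (\<beta> *\<^sub>R d))\<^sup>2 \<le> \<beta>\<^sup>2 * (4 * \<alpha>\<^sup>2 * M\<^sup>2 * n)"
  proof -
    have "(norm d)\<^sup>2 \<le> (2 * \<alpha> * M * norm mg)\<^sup>2"
      by (rule power_mono[OF nd]) simp
    then show ?thesis using bp by (simp add: power_mult_distrib n_def mult_left_mono)
  qed
  define K where "K = 2 * L0 * \<beta> * \<alpha>\<^sup>2 * M\<^sup>2"
  have "K = (4 * M\<^sup>2 * L0 * (\<alpha>\<^sup>2 * \<beta>)) / 2" unfolding K_def by (simp add: algebra_simps)
  then have K: "K < 1" using rate by linarith
  have main: "G (\<theta> - \<beta> *\<^sub>R d) \<le> G \<theta> - \<beta> * n * (1 - K)"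
  proof -
    have "L0 / 2 * (norm (\<beta> *\<^sub>R d))\<^sup>2 \<le> L0 / 2 * (\<beta>\<^sup>2 * (4 * \<alpha>\<^sup>2 * M\<^sup>2 * n))"
      by (rule mult_left_mono[OF q]) (use L0nn in simp)
    also have "\<dots> = \<beta> * n * K" by (simp add: K_def power2_eq_square)
    finally show ?thesis using desc gd by (simp add: n_def algebra_simps)
  qed
  have bn: "\<beta> * n * (1 - K) \<ge> 0" using bp nn K by simp
  have le: "G (\<theta> - \<beta> *\<^sub>R d) \<le> G \<theta>" using main bn by linarith
  have iff: "G (\<theta> - \<beta> *\<^sub>R d) = G \<theta> \<longleftrightarrow> mg = 0"
  proof
    assume "mg = 0"
    then have "d = 0" unfolding d_def by simp
    then show "G (\<theta> - \<beta> *\<^sub>R d) = G \<theta>" by simp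
  next
    assume eq: "G (\<theta> - \<beta> *\<^sub>R d) = G \<theta>"
    show "mg = 0"
    proof (rule ccontr)
      assume "mg \<noteq> 0"
      then have "n > 0" by (simp add: n_def)
      then have "\<beta> * n * (1 - K) > 0" using bp K by simp
      then show False using main eq by linarith
    qed
  qed
  show ?thesis using le iff unfolding step G_def mg_def by simp
qed


theorem theorem1:
  fixes f :: "'x \<Rightarrow> real^'d \<Rightarrow> real^'c"
    and xl :: "nat \<Rightarrow> 'x" and yl :: "nat \<Rightarrow> real^'c" and Nl :: nat
    and xu :: "nat \<Rightarrow> 'x" and Nu :: nat
    and \<alpha> \<beta> :: "nat \<Rightarrow> real" and \<theta>1 :: "real^'d"
    and xb :: "nat \<Rightarrow> 'b::finite \<Rightarrow> 'x"
    and L0 M :: real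
  assumes C1: "\<And>x \<theta>. f x differentiable (at \<theta>)"
    and C1cont: "\<And>x. continuous_on UNIV (\<lambda>\<theta>. jacobian (f x) (at \<theta>))"
    and lip: "\<And>\<theta> \<theta>'. norm (grad (labeled_loss f xl yl Nl) \<theta> - grad (labeled_loss f xl yl Nl) \<theta>')
                       \<le> L0 * norm (\<theta> - \<theta>')"
    and jac_bound: "\<And>i \<theta>. i \<in> {1..Nu} \<Longrightarrow> onorm (\<lambda>h. jacobian (f (xu i)) (at \<theta>) *v h) \<le> M"
    and batch: "\<And>t j. t \<ge> 1 \<Longrightarrow> xb t j \<in> xu ` {1..Nu}"
    and \<alpha>_pos: "\<And>t. t \<ge> 1 \<Longrightarrow> \<alpha> t > 0"
    and \<beta>_pos: "\<And>t. t \<ge> 1 \<Longrightarrow> \<beta> t > 0"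
    and rates: "\<And>t. t \<ge> 1 \<Longrightarrow> 4 * M\<^sup>2 * L0 * ((\<alpha> t)\<^sup>2 * \<beta> t) < 1"
    and t: "t \<ge> 1"
  shows "labeled_loss f xl yl Nl (iterate f xl yl Nl \<alpha> \<beta> xb \<theta>1 (Suc t))
           \<le> labeled_loss f xl yl Nl (iterate f xl yl Nl \<alpha> \<beta> xb \<theta>1 t)
       \<and> (labeled_loss f xl yl Nl (iterate f xl yl Nl \<alpha> \<beta> xb \<theta>1 (Suc t))
             = labeled_loss f xl yl Nl (iterate f xl yl Nl \<alpha> \<beta> xb \<theta>1 t)
          \<longleftrightarrow> meta_grad f xl yl Nl (\<alpha> t) (xb t) (iterate f xl yl Nl \<alpha> \<beta> xb \<theta>1 t) = 0)"
proof -
  obtain t' where tt: "t = Suc t'" using t by (cases t) auto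
  let ?\<theta> = "iterate f xl yl Nl \<alpha> \<beta> xb \<theta>1 t"
  have it: "iterate f xl yl Nl \<alpha> \<beta> xb \<theta>1 (Suc t) = meta_step f xl yl Nl (\<alpha> t) (\<beta> t) (xb t) ?\<theta>"
    unfolding tt by simp
  have jb: "\<And>i \<theta>. onorm (\<lambda>h. jacobian (f (xb t i)) (at \<theta>) *v h) \<le> M"
  proof -
    fix i \<theta>
    obtain k where "k \<in> {1..Nu}" "xb t i = xu k" using batch[OF t, of i] by blast
    then show "onorm (\<lambda>h. jacobian (f (xb t i)) (at \<theta>) *v h) \<le> M" using jac_bound by simp
  qed
  show ?thesis unfolding it
    by (rule one_step[OF C1 lip jb \<alpha>_pos[OF t] \<beta>_pos[OF t] rates[OF t]])
qed

end
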